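(* Let $\mathcal H_A,\mathcal H_B$ be finite-dimensional complex Hilbert spaces and let $\rho$ be a separable density matrix on $\mathcal H_A\otimes\mathcal H_B$. Let $\rho^{T_B}=(\mathbf 1_A\otimes T)\rho$ be its partial transpose, where $T$ is transposition in a chosen basis of $\mathcal H_B$. If $\mathcal R(\rho)\neq\mathcal R(\rho^{T_B})$, then either $\mathcal L_{\mathcal E}(\rho)>\mathcal R(\rho)$ or $\mathcal L_{\mathcal E}(\rho^{T_B})>\mathcal R(\rho^{T_B})$.
   Context: A density matrix is a positive semidefinite operator of trace one. $\rho$ is separable if it can be written as $\rho=\sum_i p_i\,|\psi_i\rangle\langle\psi_i|\otimes|\phi_i\rangle\langle\phi_i|$ with $p_i>0$ and unit vectors $\psi_i\in\mathcal H_A,\phi_i\in\mathcal H_B$ (a separable decomposition). $\mathcal R(\rho)$ denotes the rank of $\rho$. For a separable $\rho$, the optimal ensemble cardinality $\mathcal L_{\mathcal E}(\rho)$ is the least number $k$ of distinct pure product states $|\psi_i\rangle|\phi_i\rangle$ needed in a separable decomposition of $\rho$. (For separable $\rho$, $\rho^{T_B}$ is again a separable density matrix.) *)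

theory Defs
  imports "HOL-Analysis.Analysis"
begin

text \<open>Bipartite system H_A (x) H_B with H_A = C^'a, H_B = C^'b (finite index types);
  operators on H_A (x) H_B are matrices indexed by 'a \<times> 'b.\<close>

type_synonym ('a, 'b) bop = "complex ^ ('a \<times> 'b) ^ ('a \<times> 'b)"

definition psd :: "complex ^ 'n ^ 'n \<Rightarrow> bool" where
  "psd M \<longleftrightarrow> (\<forall>i j. M $ i $ j = cnj (M $ j $ i)) \<and>
     (\<forall>v :: complex ^ 'n. let q = (\<Sum>i\<in>UNIV. \<Sum>j\<in>UNIV. cnj (v $ i) * M $ i $ j * v $ j)
                           in Im q = 0 \<and> Re q \<ge> 0)"

definition mtrace :: "complex ^ 'n ^ 'n \<Rightarrow> complex" where
  "mtrace M = (\<Sum>i\<in>UNIV. M $ i $ i)"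

definition density_matrix :: "complex ^ 'n ^ 'n \<Rightarrow> bool" where
  "density_matrix M \<longleftrightarrow> psd M \<and> mtrace M = 1"

definition prod_proj :: "complex ^ 'a \<Rightarrow> complex ^ 'b \<Rightarrow> ('a, 'b) bop" where
  "prod_proj psi phi = (\<chi> r. \<chi> c.
      psi $ fst r * cnj (psi $ fst c) * phi $ snd r * cnj (phi $ snd c))"

definition pure_product_state :: "('a::finite, 'b::finite) bop \<Rightarrow> bool" where
  "pure_product_state M \<longleftrightarrow>
     (\<exists>psi phi. norm psi = 1 \<and> norm phi = 1 \<and> M = prod_proj psi phi)"

definition sep_decomp :: "('a::finite, 'b::finite) bop \<Rightarrow> ('a, 'b) bop set \<Rightarrow> (('a, 'b) bop \<Rightarrow> real) \<Rightarrow> bool" where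
  "sep_decomp rho P p \<longleftrightarrow> finite P \<and> (\<forall>M\<in>P. pure_product_state M \<and> p M > 0) \<and>
     (\<forall>r c. rho $ r $ c = (\<Sum>M\<in>P. complex_of_real (p M) * M $ r $ c))"

definition separable :: "('a::finite, 'b::finite) bop \<Rightarrow> bool" where
  "separable rho \<longleftrightarrow> (\<exists>P p. sep_decomp rho P p)"

definition ens_card :: "('a::finite, 'b::finite) bop \<Rightarrow> nat" where
  "ens_card rho = (LEAST k. \<exists>P p. sep_decomp rho P p \<and> card P = k)"

text \<open>Partial transpose on the second factor (transposition in the standard basis of C^'b).\<close>
definition partial_transpose :: "('a::finite, 'b::finite) bop \<Rightarrow> ('a, 'b) bop" where
  "partial_transpose rho = (\<chi> r. \<chi> c. rho $ (fst r, snd c) $ (fst c, snd r))"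

end

theory Submission
  imports Defs
begin

lemma pt_pt: "partial_transpose (partial_transpose M) = M"
  by (simp add: partial_transpose_def vec_eq_iff)

lemma pt_inj: "inj partial_transpose"
  by (metis injI pt_pt)

definition cvec :: "complex ^ 'n \<Rightarrow> complex ^ 'n" where
  "cvec v = (\<chi> i. cnj (v $ i))"

lemma norm_cvec: "norm (cvec v) = norm v"
  by (simp add: norm_vec_def cvec_def)

lemma pt_prod_proj: "partial_transpose (prod_proj psi phi) = prod_proj psi (cvec phi)"
  by (simp add: partial_transpose_def prod_proj_def cvec_def vec_eq_iff)

lemma pt_pure: "pure_product_state M \<Longrightarrow> pure_product_state (partial_transpose M)"
  unfolding pure_product_state_def by (metis pt_prod_proj norm_cvec)

lemma pt_decomp:
  assumes "sep_decomp rho P p"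
  shows "sep_decomp (partial_transpose rho) (partial_transpose ` P) (p \<circ> partial_transpose)"
proof -
  have fin: "finite P" and pos: "\<forall>M\<in>P. pure_product_state M \<and> p M > 0"
    and s: "\<And>r c. rho $ r $ c = (\<Sum>M\<in>P. complex_of_real (p M) * M $ r $ c)"
    using assms unfolding sep_decomp_def by auto
  have "partial_transpose rho $ r $ c =
        (\<Sum>N\<in>partial_transpose ` P. complex_of_real ((p \<circ> partial_transpose) N) * N $ r $ c)" for r c
  proof -
    have "(\<Sum>N\<in>partial_transpose ` P. complex_of_real ((p \<circ> partial_transpose) N) * N $ r $ c)
        = (\<Sum>M\<in>P. complex_of_real (p M) * partial_transpose M $ r $ c)"
      by (subst sum.reindex) (auto simp: pt_pt inj_on_def intro: injD[OF pt_inj])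
    also have "\<dots> = partial_transpose rho $ r $ c"
      by (simp add: partial_transpose_def s)
    finally show ?thesis by simp
  qed
  moreover have "\<forall>N\<in>partial_transpose ` P. pure_product_state N \<and> (p \<circ> partial_transpose) N > 0"
    using pos pt_pure by (auto simp: pt_pt)
  ultimately show ?thesis using fin unfolding sep_decomp_def by blast
qed

lemma card_pt: "card (partial_transpose ` P) = card P"
  by (meson card_image inj_on_subset pt_inj subset_UNIV)

lemma ens_exists:
  assumes "separable rho"
  shows "\<exists>P p. sep_decomp rho P p \<and> card P = ens_card rho"
proof -
  from assms obtain P p where "sep_decomp rho P p" unfolding separable_def by blast
  then have "\<exists>k. \<exists>P p. sep_decomp rho P p \<and> card P = k" by blast
  then show ?thesis unfolding ens_card_def by (rule LeastI_ex)
qed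

lemma ens_le: "sep_decomp rho P p \<Longrightarrow> ens_card rho \<le> card P"
  unfolding ens_card_def by (rule Least_le) blast

lemma ens_pt_le:
  assumes "separable rho"
  shows "ens_card (partial_transpose rho) \<le> ens_card rho"
proof -
  obtain P p where "sep_decomp rho P p" "card P = ens_card rho" using ens_exists[OF assms] by blast
  then show ?thesis using ens_le[OF pt_decomp] card_pt by metis
qed

lemma sep_pt: "separable rho \<Longrightarrow> separable (partial_transpose rho)"
  unfolding separable_def using pt_decomp by blast

lemma rank_le_card:
  fixes rho :: "('a::finite, 'b::finite) bop"
  assumes "sep_decomp rho P p"
  shows "rank rho \<le> card P"
proof -
  have fin: "finite P" and pos: "\<forall>M\<in>P. pure_product_state M \<and> p M > 0"
    and s: "\<And>r c. rho $ r $ c = (\<Sum>M\<in>P. complex_of_real (p M) * M $ r $ c)"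
    using assms unfolding sep_decomp_def by auto
  define ps where "ps M = (SOME pp. M = prod_proj (fst pp) (snd pp))" for M :: "('a,'b) bop"
  have psM: "M = prod_proj (fst (ps M)) (snd (ps M))" if "M \<in> P" for M
  proof -
    from pos that obtain psi phi where "M = prod_proj psi phi" unfolding pure_product_state_def by blast
    then have "\<exists>pp. M = prod_proj (fst pp) (snd pp)" by (metis fst_conv snd_conv)
    then show ?thesis unfolding ps_def by (rule someI_ex)
  qed
  define w where "w M = ((\<chi> c. cnj (fst (ps M) $ fst c) * cnj (snd (ps M) $ snd c)) :: complex ^ ('a \<times> 'b))" for M
  define a where "a M r = fst (ps M) $ fst r * snd (ps M) $ snd r" for M r
  have rowM: "row r M = a M r *s w M" if "M \<in> P" for M r
    apply (subst psM[OF that])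
    by (simp add: row_def w_def a_def prod_proj_def vec_eq_iff)
  have "row r rho = (\<Sum>M\<in>P. (complex_of_real (p M) * a M r) *s w M)" for r
  proof -
    have "row r rho = (\<Sum>M\<in>P. complex_of_real (p M) *s row r M)"
      by (simp add: row_def vec_eq_iff s sum_component)
    also have "\<dots> = (\<Sum>M\<in>P. (complex_of_real (p M) * a M r) *s w M)"
      by (intro sum.cong refl) (simp add: rowM vector_smult_assoc)
    finally show ?thesis .
  qed
  then have "rows rho \<subseteq> vec.span (w ` P)"
  proof -
    assume h: "\<And>r. row r rho = (\<Sum>M\<in>P. (complex_of_real (p M) * a M r) *s w M)"
    have "row r rho \<in> vec.span (w ` P)" for r
      unfolding h by (intro vec.span_sum vec.span_scale vec.span_base) auto
    then show ?thesis unfolding rows_def by blast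
  qed
  then have "vec.dim (rows rho) \<le> card (w ` P)"
    using fin by (intro vec.dim_le_card) auto
  also have "\<dots> \<le> card P" using fin card_image_le by blast
  finally show ?thesis by (simp add: row_rank_def_gen)
qed

lemma rank_le_ens:
  assumes "separable rho"
  shows "rank rho \<le> ens_card rho"
  using ens_exists[OF assms] rank_le_card by metis

theorem theorem1:
  fixes rho :: "complex ^ ('a::finite \<times> 'b::finite) ^ ('a \<times> 'b)"
  assumes "density_matrix rho"
    and "separable rho"
    and "rank rho \<noteq> rank (partial_transpose rho)"
  shows "ens_card rho > rank rho \<or>
         ens_card (partial_transpose rho) > rank (partial_transpose rho)"
proof (rule ccontr)
  assume c: "\<not> ?thesis"
  have s2: "separable (partial_transpose rho)" using sep_pt assms(2) .
  have e1: "ens_card (partial_transpose rho) \<le> ens_card rho" using ens_pt_le assms(2) .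
  have e2: "ens_card rho \<le> ens_card (partial_transpose rho)"
    using ens_pt_le[OF s2] by (simp add: pt_pt)
  have r1: "rank rho \<le> ens_card rho" using rank_le_ens assms(2) .
  have r2: "rank (partial_transpose rho) \<le> ens_card (partial_transpose rho)" using rank_le_ens s2 .
  show False using c e1 e2 r1 r2 assms(3) by linarith
qed

end
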